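(* Let $m\ge1$, let $a^0,\dots,a^{m-1}$ have absolutely summable Chebyshev coefficients, and let $\mathcal B$ be a linear map from finitely supported Chebyshev coefficient sequences to $\mathbb R^m$ with $\mathcal B\mathcal X$ invertible, $\mathbf b\in\mathbb R^m$. Then: (i) $\mathcal L\mathcal X=\mathcal S_{m-1}\cdots\mathcal S_0\mathcal A$; (ii) for every finitely supported sequence $\mathbf v$, setting $\mathbf u=\mathcal Q^m\mathbf v+\mathcal X(\mathcal B\mathcal X)^{-1}(\mathbf b-\mathcal B\mathcal Q^m\mathbf v)$, one has $\mathcal B\mathbf u=\mathbf b$ and $$\mathcal L\mathbf u=\mathcal S_{m-1}\cdots\mathcal S_0\big(\widetilde{\mathcal L}\mathbf v+\mathcal A(\mathcal B\mathcal X)^{-1}\mathbf b\big).$$ Consequently $\mathcal L\mathbf u=\mathcal S_{m-1}\cdots\mathcal S_0\mathbf f$ holds if and only if $\mathcal S_{m-1}\cdots\mathcal S_0\widetilde{\mathcal L}\mathbf v=\mathcal S_{m-1}\cdots\mathcal S_0\big(\mathbf f-\mathcal A(\mathcal B\mathcal X)^{-1}\mathbf b\big)$.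
   Context: All vectors are Chebyshev coefficient sequences. $\mathcal S_0$ (Chebyshev to $C^{(1)}$ coefficients) and $\mathcal S_\lambda$ ($C^{(\lambda)}$ to $C^{(\lambda+1)}$ coefficients) are the conversion operators; $\mathcal D_k$ maps Chebyshev coefficients of $u$ to $C^{(k)}$ coefficients of $u^{(k)}$; $\mathcal M_0[a]$ maps Chebyshev coefficients of $u$ to those of $au$; $\mathcal M_k[a]$ maps $C^{(k)}$ coefficients of $u$ to those of $au$; $\mathcal Q$ maps Chebyshev coefficients of $v$ to those of $\int_{-1}^x v(t)dt$. Define $$\mathcal L=\mathcal D_m+\sum_{k=1}^{m-1}\mathcal S_{m-1}\cdots\mathcal S_k\mathcal M_k[a^k]\mathcal D_k+\mathcal S_{m-1}\cdots\mathcal S_0\mathcal M_0[a^0],$$ $$\widetilde{\mathcal L}=\mathcal I+\sum_{k=0}^{m-1}\mathcal M_0[a^k]\mathcal Q^{m-k}-\mathcal A(\mathcal B\mathcal X)^{-1}\mathcal B\mathcal Q^m.$$ $\mathcal X=[\mathbf x^0\ \cdots\ \mathbf x^{m-1}]$ where $\mathbf x^j$ is the Chebyshev coefficient vector of $x^j$; $\mathcal B\mathcal X$ is the $m\times m$ matrix with columns $\mathcal B\mathbf x^j$; $\mathcal A=[\mathbf A_0\ \cdots\ \mathbf A_{m-1}]$ where $\mathbf A_j$ is the Chebyshev coefficient vector of $\sum_{k=0}^{j}\frac{j!}{(j-k)!}a^k(x)x^{j-k}$. *)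

theory Defs
  imports "HOL-Analysis.Analysis" "Jordan_Normal_Form.Matrix"
begin

text \<open>All sequences are coefficient sequences of type nat => real (index n = coefficient of
  the n-th basis polynomial).  Operators are given by their standard (ultraspherical spectral
  method, Olver--Townsend) coefficient formulas.\<close>

definition fin_supp :: "(nat \<Rightarrow> real) \<Rightarrow> bool" where
  "fin_supp c \<longleftrightarrow> finite {n. c n \<noteq> 0}"

fun chebT :: "nat \<Rightarrow> real \<Rightarrow> real" where
  "chebT 0 x = 1"
| "chebT (Suc 0) x = x"
| "chebT (Suc (Suc n)) x = 2 * x * chebT (Suc n) x - chebT n x"

definition xvec :: "nat \<Rightarrow> nat \<Rightarrow> real" where
  "xvec j = (THE c. (\<forall>n>j. c n = 0) \<and> (\<forall>x. (\<Sum>n\<le>j. c n * chebT n x) = x ^ j))"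

text \<open>Conversion operators: S_0 (Chebyshev to C^(1)), S_lambda (C^(lambda) to C^(lambda+1)), lambda \<ge> 1\<close>
definition convS :: "nat \<Rightarrow> (nat \<Rightarrow> real) \<Rightarrow> nat \<Rightarrow> real" where
  "convS lam c n =
     (if lam = 0 then (if n = 0 then c 0 - c 2 / 2 else (c n - c (n + 2)) / 2)
      else real lam / real (lam + n) * c n - real lam / real (lam + n + 2) * c (n + 2))"

fun Schain :: "nat \<Rightarrow> nat \<Rightarrow> (nat \<Rightarrow> real) \<Rightarrow> nat \<Rightarrow> real" where
  "Schain lo 0 c = c"
| "Schain lo (Suc k) c = convS (lo + k) (Schain lo k c)"

text \<open>Differentiation D_k (k \<ge> 1): Chebyshev coefficients of u to C^(k) coefficients of u^(k)\<close>
definition diffD :: "nat \<Rightarrow> (nat \<Rightarrow> real) \<Rightarrow> nat \<Rightarrow> real" where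
  "diffD k c n = 2 ^ (k - 1) * fact (k - 1) * real (n + k) * c (n + k)"

text \<open>Multiplication M_0[a] in Chebyshev coefficients (T_j T_k = (T_{j+k} + T_{|j-k|})/2)\<close>
definition mult0 :: "(nat \<Rightarrow> real) \<Rightarrow> (nat \<Rightarrow> real) \<Rightarrow> nat \<Rightarrow> real" where
  "mult0 a u n =
     (\<Sum>k\<le>n. a (n - k) * u k) / 2
     + (\<Sum>k. (a (k + n) + (if 1 \<le> n \<and> n \<le> k then a (k - n) else 0)) * u k) / 2"

text \<open>Multiplication M_k[a] in C^(k) coefficients (acting on finitely supported sequences):
  the C^(k) coefficients of a u, obtained by converting the C^(k) coefficients back to
  Chebyshev coefficients, multiplying there, and converting to C^(k).\<close>
definition multk :: "nat \<Rightarrow> (nat \<Rightarrow> real) \<Rightarrow> (nat \<Rightarrow> real) \<Rightarrow> nat \<Rightarrow> real" where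
  "multk k a v = Schain 0 k (mult0 a (THE w. fin_supp w \<and> Schain 0 k w = v))"

text \<open>Indefinite integration Q from -1 in Chebyshev coefficients\<close>
definition intQpos :: "(nat \<Rightarrow> real) \<Rightarrow> nat \<Rightarrow> real" where
  "intQpos v n = (if n = 0 then 0 else if n = 1 then v 0 - v 2 / 2
                  else (v (n - 1) - v (n + 1)) / (2 * real n))"

definition intQ :: "(nat \<Rightarrow> real) \<Rightarrow> nat \<Rightarrow> real" where
  "intQ v n = (if n = 0 then - (\<Sum>j. (-1) ^ (Suc j) * intQpos v (Suc j)) else intQpos v n)"

text \<open>The operator L, with a k the Chebyshev coefficients of a^k\<close>
definition opL :: "nat \<Rightarrow> (nat \<Rightarrow> nat \<Rightarrow> real) \<Rightarrow> (nat \<Rightarrow> real) \<Rightarrow> nat \<Rightarrow> real" where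
  "opL m a u = (\<lambda>n. diffD m u n
      + (\<Sum>k\<in>{1..m-1}. Schain k (m - k) (multk k (a k) (diffD k u)) n)
      + Schain 0 m (mult0 (a 0) u) n)"

definition Acol :: "(nat \<Rightarrow> nat \<Rightarrow> real) \<Rightarrow> nat \<Rightarrow> nat \<Rightarrow> real" where
  "Acol a j = (\<lambda>n. \<Sum>k\<le>j. fact j / fact (j - k) * mult0 (a k) (xvec (j - k)) n)"

definition BXmat :: "nat \<Rightarrow> ((nat \<Rightarrow> real) \<Rightarrow> real vec) \<Rightarrow> real mat" where
  "BXmat m B = mat m m (\<lambda>(i, j). B (xvec j) $ i)"

definition inv_matrix :: "nat \<Rightarrow> real mat \<Rightarrow> real mat" where
  "inv_matrix m M = (THE N. N \<in> carrier_mat m m \<and> M * N = 1\<^sub>m m \<and> N * M = 1\<^sub>m m)"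

definition applyX :: "nat \<Rightarrow> real vec \<Rightarrow> nat \<Rightarrow> real" where
  "applyX m w = (\<lambda>n. \<Sum>j<m. w $ j * xvec j n)"

definition applyA :: "nat \<Rightarrow> (nat \<Rightarrow> nat \<Rightarrow> real) \<Rightarrow> real vec \<Rightarrow> nat \<Rightarrow> real" where
  "applyA m a w = (\<lambda>n. \<Sum>j<m. w $ j * Acol a j n)"

definition opLt :: "nat \<Rightarrow> (nat \<Rightarrow> nat \<Rightarrow> real) \<Rightarrow> ((nat \<Rightarrow> real) \<Rightarrow> real vec)
                     \<Rightarrow> (nat \<Rightarrow> real) \<Rightarrow> nat \<Rightarrow> real" where
  "opLt m a B v = (\<lambda>n. v n + (\<Sum>k<m. mult0 (a k) ((intQ ^^ (m - k)) v) n)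
      - applyA m a (inv_matrix m (BXmat m B) *\<^sub>v B ((intQ ^^ m) v)) n)"

end

theory Submission
  imports Defs
begin


lemma fin_supp_iff: "fin_supp c \<longleftrightarrow> (\<exists>N. \<forall>n>N. c n = 0)"
proof
  assume "fin_supp c"
  then have f: "finite {n. c n \<noteq> 0}" by (simp add: fin_supp_def)
  then obtain N where "\<forall>n\<in>{n. c n \<noteq> 0}. n \<le> N" using finite_nat_set_iff_bounded_le by blast
  then show "\<exists>N. \<forall>n>N. c n = 0" by (metis mem_Collect_eq not_le)
next
  assume "\<exists>N. \<forall>n>N. c n = 0"
  then obtain N where "\<forall>n>N. c n = 0" by blast
  then have "{n. c n \<noteq> 0} \<subseteq> {..N}" by (auto simp: not_less[symmetric])
  then show "fin_supp c" unfolding fin_supp_def using finite_subset by blast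
qed

lemma fin_supp_zero[simp]: "fin_supp (\<lambda>_. 0)"
  by (auto simp: fin_supp_iff)

lemma fin_supp_add: "fin_supp u \<Longrightarrow> fin_supp w \<Longrightarrow> fin_supp (\<lambda>n. u n + w n)"
proof -
  assume "fin_supp u" "fin_supp w"
  then obtain N M where "\<forall>n>N. u n = 0" "\<forall>n>M. w n = 0" by (auto simp: fin_supp_iff)
  then have "\<forall>n>max N M. u n + w n = 0" by auto
  then show ?thesis unfolding fin_supp_iff by blast
qed

lemma fin_supp_diff: "fin_supp u \<Longrightarrow> fin_supp w \<Longrightarrow> fin_supp (\<lambda>n. u n - w n)"
proof -
  assume "fin_supp u" "fin_supp w"
  then obtain N M where "\<forall>n>N. u n = 0" "\<forall>n>M. w n = 0" by (auto simp: fin_supp_iff)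
  then have "\<forall>n>max N M. u n - w n = 0" by auto
  then show ?thesis unfolding fin_supp_iff by blast
qed

lemma fin_supp_scale: "fin_supp u \<Longrightarrow> fin_supp (\<lambda>n. c * u n)"
  by (auto simp: fin_supp_iff)

lemma fin_supp_sum: "finite J \<Longrightarrow> (\<forall>j\<in>J. fin_supp (g j)) \<Longrightarrow> fin_supp (\<lambda>n. \<Sum>j\<in>J. g j n)"
proof (induction J rule: finite_induct)
  case empty then show ?case by simp
next
  case (insert x F)
  then show ?case using fin_supp_add[of "g x" "\<lambda>n. \<Sum>j\<in>F. g j n"] by simp
qed

lemma fin_supp_convS: "fin_supp c \<Longrightarrow> fin_supp (convS lam c)"
proof -
  assume "fin_supp c"
  then obtain N where N: "\<forall>n>N. c n = 0" by (auto simp: fin_supp_iff)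
  then have "\<forall>n>N. convS lam c n = 0" by (auto simp: convS_def)
  then show ?thesis by (auto simp: fin_supp_iff)
qed

lemma fin_supp_Schain: "fin_supp c \<Longrightarrow> fin_supp (Schain lo k c)"
  by (induction k) (auto simp: fin_supp_convS)

lemma fin_supp_diffD: "fin_supp c \<Longrightarrow> fin_supp (diffD k c)"
proof -
  assume "fin_supp c"
  then obtain N where N: "\<forall>n>N. c n = 0" by (auto simp: fin_supp_iff)
  then have "\<forall>n>N. diffD k c n = 0" by (auto simp: diffD_def)
  then show ?thesis by (auto simp: fin_supp_iff)
qed

lemma convS_add: "convS lam (\<lambda>n. u n + w n) = (\<lambda>n. convS lam u n + convS lam w n)"
  by (auto simp: convS_def fun_eq_iff algebra_simps add_divide_distrib diff_divide_distrib)

lemma convS_diff: "convS lam (\<lambda>n. u n - w n) = (\<lambda>n. convS lam u n - convS lam w n)"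
  by (auto simp: convS_def fun_eq_iff algebra_simps add_divide_distrib diff_divide_distrib)

lemma convS_scale: "convS lam (\<lambda>n. c * u n) = (\<lambda>n. c * convS lam u n)"
  by (auto simp: convS_def fun_eq_iff algebra_simps add_divide_distrib diff_divide_distrib)

lemma convS_zero: "convS lam (\<lambda>_. 0) = (\<lambda>_. 0)"
  by (auto simp: convS_def fun_eq_iff)

lemma Schain_add: "Schain lo k (\<lambda>n. u n + w n) = (\<lambda>n. Schain lo k u n + Schain lo k w n)"
  by (induction k) (auto simp: convS_add)

lemma Schain_diff: "Schain lo k (\<lambda>n. u n - w n) = (\<lambda>n. Schain lo k u n - Schain lo k w n)"
  by (induction k) (auto simp: convS_diff)

lemma Schain_scale: "Schain lo k (\<lambda>n. c * u n) = (\<lambda>n. c * Schain lo k u n)"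
  by (induction k) (auto simp: convS_scale)

lemma Schain_zero: "Schain lo k (\<lambda>_. 0) = (\<lambda>_. 0)"
  by (induction k) (auto simp: convS_zero)

lemma Schain_sum: "finite J \<Longrightarrow> Schain lo k (\<lambda>n. \<Sum>j\<in>J. g j n) = (\<lambda>n. \<Sum>j\<in>J. Schain lo k (g j) n)"
proof (induction J rule: finite_induct)
  case empty then show ?case by (simp add: Schain_zero)
next
  case (insert x F)
  then show ?case by (simp add: Schain_add)
qed

lemma Schain_comp: "Schain (lo + i) j (Schain lo i c) = Schain lo (i + j) c"
  by (induction j) (auto simp: add.assoc)

lemma convS_zero_inj:
  assumes "fin_supp z" "convS lam z = (\<lambda>_. 0)" shows "z = (\<lambda>_. 0)"
proof (rule ccontr)
  assume ne: "z \<noteq> (\<lambda>_. 0)"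
  let ?S = "{n. z n \<noteq> 0}"
  have fin: "finite ?S" using assms(1) fin_supp_def by blast
  have nem: "?S \<noteq> {}" using ne by auto
  define M where "M = Max ?S"
  have zM: "z M \<noteq> 0" using Max_in[OF fin nem] M_def by auto
  have z2: "z (M+2) = 0" using Max_ge[OF fin, of "M+2"] M_def by force
  have c: "convS lam z M = 0" using assms(2) by metis
  show False
  proof (cases "lam = 0")
    case True then show ?thesis using c zM z2 by (auto simp: convS_def numeral_2_eq_2 split: if_splits)
  next
    case False
    then have "real lam / real (lam + M) \<noteq> 0" by auto
    then show ?thesis using c zM z2 False by (auto simp: convS_def split: if_splits)
  qed
qed

lemma convS_inj: "fin_supp x \<Longrightarrow> fin_supp y \<Longrightarrow> convS lam x = convS lam y \<Longrightarrow> x = y"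
proof -
  assume a: "fin_supp x" "fin_supp y" "convS lam x = convS lam y"
  have "convS lam (\<lambda>n. x n - y n) = (\<lambda>_. 0)" using a(3) by (simp add: convS_diff)
  then have "(\<lambda>n. x n - y n) = (\<lambda>_. 0)" using convS_zero_inj fin_supp_diff a by blast
  then show "x = y" by (auto simp: fun_eq_iff dest: fun_cong)
qed

lemma Schain_inj: "fin_supp c \<Longrightarrow> fin_supp d \<Longrightarrow> Schain lo k c = Schain lo k d \<Longrightarrow> c = d"
proof (induction k)
  case 0 then show ?case by simp
next
  case (Suc k)
  then have "Schain lo k c = Schain lo k d"
    using convS_inj fin_supp_Schain by (metis Schain.simps(2))
  then show ?case using Suc by blast
qed

lemma diffD_add: "diffD k (\<lambda>n. u n + w n) = (\<lambda>n. diffD k u n + diffD k w n)"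
  by (auto simp: diffD_def fun_eq_iff algebra_simps)

lemma diffD_scale: "diffD k (\<lambda>n. c * u n) = (\<lambda>n. c * diffD k u n)"
  by (auto simp: diffD_def fun_eq_iff algebra_simps)

lemma diffD_zero: "diffD k (\<lambda>_. 0) = (\<lambda>_. 0)"
  by (auto simp: diffD_def fun_eq_iff)

lemma convS0_surj_aux: "\<forall>g. (\<forall>n>N. g n = 0) \<longrightarrow> (\<exists>d. fin_supp d \<and> convS 0 d = g)"
proof (induction N rule: less_induct)
  case (less N)
  show ?case
  proof (intro allI impI)
    fix g :: "nat \<Rightarrow> real" assume g: "\<forall>n>N. g n = 0"
    show "\<exists>d. fin_supp d \<and> convS 0 d = g"
    proof (cases N)
      case 0
      have "convS 0 g = g" using g 0 by (auto simp: convS_def fun_eq_iff)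
      moreover have "fin_supp g" using g fin_supp_iff by blast
      ultimately show ?thesis by blast
    next
      case (Suc M)
      define d1 where "d1 = (\<lambda>n. if n = N then 2 * g N else (0::real))"
      define g' where "g' = (\<lambda>n. g n - convS 0 d1 n)"
      have c1: "convS 0 d1 N = g N" using Suc by (auto simp: convS_def d1_def)
      have c2: "\<forall>n>N. convS 0 d1 n = 0" by (auto simp: convS_def d1_def)
      have "\<forall>n>M. g' n = 0"
      proof (intro allI impI)
        fix n assume "n > M"
        then have "n = N \<or> n > N" using Suc by auto
        then show "g' n = 0" using c1 c2 g by (auto simp: g'_def)
      qed
      then obtain d2 where d2: "fin_supp d2" "convS 0 d2 = g'" using less Suc by blast
      have fd1: "fin_supp d1" unfolding fin_supp_iff d1_def by (rule exI[of _ N]) auto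
      have "convS 0 (\<lambda>n. d1 n + d2 n) = g" using d2 by (auto simp: convS_add g'_def fun_eq_iff)
      then show ?thesis using fin_supp_add[OF fd1 d2(1)] by blast
    qed
  qed
qed

lemma convS0_surj: "fin_supp g \<Longrightarrow> \<exists>d. fin_supp d \<and> convS 0 d = g"
  using convS0_surj_aux fin_supp_iff by blast

definition der :: "(nat \<Rightarrow> real) \<Rightarrow> nat \<Rightarrow> real" where
  "der u = (THE d. fin_supp d \<and> convS 0 d = diffD 1 u)"

lemma der_ex: "fin_supp u \<Longrightarrow> \<exists>!d. fin_supp d \<and> convS 0 d = diffD 1 u"
  using convS0_surj[OF fin_supp_diffD] convS_inj by metis

lemma der_spec: "fin_supp u \<Longrightarrow> fin_supp (der u) \<and> convS 0 (der u) = diffD 1 u"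
proof -
  assume a: "fin_supp u"
  show ?thesis using theI'[OF der_ex[OF a]] unfolding der_def .
qed

lemma der_fin[simp]: "fin_supp u \<Longrightarrow> fin_supp (der u)"
  using der_spec by blast

lemma der_eq: "fin_supp u \<Longrightarrow> fin_supp d \<Longrightarrow> convS 0 d = diffD 1 u \<Longrightarrow> der u = d"
  using der_spec convS_inj by metis

lemma der_add: assumes "fin_supp u" "fin_supp w"
  shows "der (\<lambda>n. u n + w n) = (\<lambda>n. der u n + der w n)"
  apply (rule der_eq) using assms der_spec by (auto simp: fin_supp_add convS_add diffD_add)

lemma der_scale: assumes "fin_supp u"
  shows "der (\<lambda>n. c * u n) = (\<lambda>n. c * der u n)"
  apply (rule der_eq) using assms der_spec by (auto simp: fin_supp_scale convS_scale diffD_scale)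

lemma der_zero: "der (\<lambda>_. 0) = (\<lambda>_. 0)"
  by (rule der_eq) (auto simp: convS_zero diffD_zero)

lemma der_sum: "finite J \<Longrightarrow> (\<forall>j\<in>J. fin_supp (g j)) \<Longrightarrow>
    der (\<lambda>n. \<Sum>j\<in>J. c j * g j n) = (\<lambda>n. \<Sum>j\<in>J. c j * der (g j) n)"
proof (induction J rule: finite_induct)
  case empty then show ?case by (simp add: der_zero)
next
  case (insert x F)
  have f1: "fin_supp (\<lambda>n. c x * g x n)" using insert fin_supp_scale by auto
  have f2: "fin_supp (\<lambda>n. \<Sum>j\<in>F. c j * g j n)" using insert fin_supp_sum[of F "\<lambda>j n. c j * g j n"] fin_supp_scale by auto
  show ?case using insert der_add[OF f1 f2] der_scale[of "g x" "c x"] by simp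
qed

lemma derk_fin[simp]: "fin_supp u \<Longrightarrow> fin_supp ((der ^^ k) u)"
  by (induction k) auto

lemma derk_add: "fin_supp u \<Longrightarrow> fin_supp w \<Longrightarrow>
    (der ^^ k) (\<lambda>n. u n + w n) = (\<lambda>n. (der ^^ k) u n + (der ^^ k) w n)"
  by (induction k) (auto simp: der_add)

lemma derk_scale: "fin_supp u \<Longrightarrow> (der ^^ k) (\<lambda>n. c * u n) = (\<lambda>n. c * (der ^^ k) u n)"
  by (induction k) (auto simp: der_scale)

lemma derk_sum: "finite J \<Longrightarrow> (\<forall>j\<in>J. fin_supp (g j)) \<Longrightarrow>
    (der ^^ k) (\<lambda>n. \<Sum>j\<in>J. c j * g j n) = (\<lambda>n. \<Sum>j\<in>J. c j * (der ^^ k) (g j) n)"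
proof (induction k)
  case 0 then show ?case by simp
next
  case (Suc k)
  then show ?case using der_sum[of J "\<lambda>j. (der ^^ k) (g j)" c] by simp
qed

lemma der_rec: assumes "fin_supp u" "i \<ge> 1"
  shows "der u i - der u (i+2) = 2 * real (i+1) * u (i+1)"
proof -
  have "convS 0 (der u) i = diffD 1 u i" using der_spec[OF assms(1)] by simp
  then show ?thesis using assms(2) by (auto simp: convS_def diffD_def field_simps)
qed

lemma diffD_step: assumes "fin_supp u" "k \<ge> 1"
  shows "diffD (Suc k) u = convS k (diffD k (der u))"
proof
  fix n
  obtain j where k: "k = Suc j" using assms(2) by (cases k) auto
  have r: "der u (n+k) - der u (n+k+2) = 2 * real (n+k+1) * u (n+k+1)"
    using der_rec[OF assms(1), of "n+k"] assms(2) by simp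
  have e1: "real k / real (k+n) * real (n+k) = real k" using k by (simp add: add.commute)
  have e2: "real k / real (k+n+2) * real (n+2+k) = real k" using k by (simp add: add.commute add.left_commute)
  have "convS k (diffD k (der u)) n
      = real k / real (k+n) * (2 ^ (k - 1) * fact (k - 1) * real (n + k) * der u (n + k))
        - real k / real (k+n+2) * (2 ^ (k - 1) * fact (k - 1) * real (n + 2 + k) * der u (n + 2 + k))"
    using k by (simp add: convS_def diffD_def)
  also have "\<dots> = 2 ^ (k - 1) * fact (k - 1) * (real k / real (k+n) * real (n + k)) * der u (n + k)
        - 2 ^ (k - 1) * fact (k - 1) * (real k / real (k+n+2) * real (n + 2 + k)) * der u (n + 2 + k)"
    by (simp only: mult_ac)
  also have "\<dots> = 2 ^ (k - 1) * fact (k - 1) * real k * (der u (n + k) - der u (n + k + 2))"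
    by (simp only: e1 e2) (simp add: algebra_simps)
  also have "\<dots> = 2 ^ (k - 1) * fact (k - 1) * real k * (2 * real (n+k+1) * u (n+k+1))"
    by (simp only: r)
  also have "\<dots> = diffD (Suc k) u n"
    using k by (simp add: diffD_def algebra_simps)
  finally show "diffD (Suc k) u n = convS k (diffD k (der u)) n" by simp
qed

lemma diffD_Schain: "fin_supp u \<Longrightarrow> diffD (Suc k) u = Schain 0 (Suc k) ((der ^^ Suc k) u)"
proof (induction k arbitrary: u)
  case 0
  then show ?case using der_spec by simp
next
  case (Suc k)
  have "diffD (Suc (Suc k)) u = convS (Suc k) (diffD (Suc k) (der u))"
    using diffD_step Suc.prems by simp
  also have "\<dots> = convS (Suc k) (Schain 0 (Suc k) ((der ^^ Suc k) (der u)))"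
    using Suc.IH der_spec Suc.prems by simp
  also have "(der ^^ Suc k) (der u) = (der ^^ Suc (Suc k)) u"
    by (simp only: funpow_Suc_right comp_def)
  finally show ?case by simp
qed

lemma multk_eq: assumes u: "fin_supp u" and k1: "k \<ge> 1"
  shows "multk k a (diffD k u) = Schain 0 k (mult0 a ((der ^^ k) u))"
proof -
  obtain j where k: "k = Suc j" using k1 by (cases k) auto
  have D: "diffD k u = Schain 0 k ((der ^^ k) u)" using diffD_Schain[OF u] k by simp
  have "(THE w. fin_supp w \<and> Schain 0 k w = diffD k u) = (der ^^ k) u"
    apply (rule the_equality) using D derk_fin u Schain_inj by auto
  then show ?thesis unfolding multk_def by simp
qed

lemma fin_supp_intQ: "fin_supp v \<Longrightarrow> fin_supp (intQ v)"
proof -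
  assume "fin_supp v"
  then obtain N where N: "\<forall>n>N. v n = 0" by (auto simp: fin_supp_iff)
  then have "\<forall>n>N+1. intQ v n = 0" by (auto simp: intQ_def intQpos_def)
  then show ?thesis unfolding fin_supp_iff by blast
qed

lemma convS_intQ: "convS 0 v = diffD 1 (intQ v)"
proof
  fix n
  show "convS 0 v n = diffD 1 (intQ v) n"
  proof (cases "n = 0")
    case True then show ?thesis by (simp add: convS_def diffD_def intQ_def intQpos_def)
  next
    case False
    have e: "real (Suc n) * ((v n - v (Suc n + 1)) / (2 * real (Suc n))) = (v n - v (n + 2)) / 2"
      by (simp add: field_simps)
    show ?thesis using False e by (simp add: convS_def diffD_def intQ_def intQpos_def)
  qed
qed

lemma der_intQ: "fin_supp v \<Longrightarrow> der (intQ v) = v"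
  by (rule der_eq) (auto simp: fin_supp_intQ convS_intQ)

lemma fin_intQk[simp]: "fin_supp v \<Longrightarrow> fin_supp ((intQ ^^ k) v)"
  by (induction k) (auto simp: fin_supp_intQ)

lemma derk_intQ: "fin_supp v \<Longrightarrow> k \<le> m \<Longrightarrow> (der ^^ k) ((intQ ^^ m) v) = (intQ ^^ (m - k)) v"
proof (induction k)
  case 0 then show ?case by simp
next
  case (Suc k)
  then have e: "(intQ ^^ (m - k)) v = intQ ((intQ ^^ (m - Suc k)) v)"
    by (metis Suc_diff_le Suc_le_D diff_Suc_Suc funpow.simps(2) o_apply Suc_le_eq)
  show ?case using Suc e der_intQ by simp
qed

lemma mult0_fin: assumes "\<forall>k>N. u k = 0"
  shows "mult0 a u n = (\<Sum>k\<le>n. a (n - k) * u k) / 2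
     + (\<Sum>k\<le>N. (a (k + n) + (if 1 \<le> n \<and> n \<le> k then a (k - n) else 0)) * u k) / 2"
  unfolding mult0_def using assms by (subst suminf_finite[of "{..N}"]) (auto simp: not_le)

lemma mult0_add: assumes "fin_supp u" "fin_supp w"
  shows "mult0 a (\<lambda>n. u n + w n) = (\<lambda>n. mult0 a u n + mult0 a w n)"
proof
  fix n
  obtain N M where NM: "\<forall>n>N. u n = 0" "\<forall>n>M. w n = 0" using assms by (auto simp: fin_supp_iff)
  have a1: "\<forall>k>max N M. u k = 0" "\<forall>k>max N M. w k = 0" "\<forall>k>max N M. u k + w k = 0" using NM by auto
  show "mult0 a (\<lambda>n. u n + w n) n = mult0 a u n + mult0 a w n"
    by (simp add: mult0_fin[OF a1(1)] mult0_fin[OF a1(2)] mult0_fin[OF a1(3)] sum.distrib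
        algebra_simps add_divide_distrib)
qed

lemma mult0_scale: assumes "fin_supp u"
  shows "mult0 a (\<lambda>n. c * u n) = (\<lambda>n. c * mult0 a u n)"
proof
  fix n
  obtain N where N: "\<forall>n>N. u n = 0" using assms by (auto simp: fin_supp_iff)
  have a1: "\<forall>k>N. c * u k = 0" using N by auto
  show "mult0 a (\<lambda>n. c * u n) n = c * mult0 a u n"
    by (simp add: mult0_fin[OF a1] mult0_fin[OF N] sum_distrib_left algebra_simps add_divide_distrib)
qed

lemma mult0_zero: "mult0 a (\<lambda>_. 0) = (\<lambda>_. 0)"
  by (auto simp: mult0_def fun_eq_iff)

lemma mult0_sum: "finite J \<Longrightarrow> (\<forall>j\<in>J. fin_supp (g j)) \<Longrightarrow>
    mult0 a (\<lambda>n. \<Sum>j\<in>J. c j * g j n) = (\<lambda>n. \<Sum>j\<in>J. c j * mult0 a (g j) n)"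
proof (induction J rule: finite_induct)
  case empty then show ?case by (simp add: mult0_zero)
next
  case (insert x F)
  have f1: "fin_supp (\<lambda>n. c x * g x n)" using insert fin_supp_scale by auto
  have f2: "fin_supp (\<lambda>n. \<Sum>j\<in>F. c j * g j n)" using insert fin_supp_sum[of F "\<lambda>j n. c j * g j n"] fin_supp_scale by auto
  show ?case using insert mult0_add[OF f1 f2] mult0_scale[of "g x" _ "c x"] by simp
qed

definition Fop :: "nat \<Rightarrow> (nat \<Rightarrow> nat \<Rightarrow> real) \<Rightarrow> (nat \<Rightarrow> real) \<Rightarrow> nat \<Rightarrow> real" where
  "Fop m a u = (\<lambda>n. (der ^^ m) u n + (\<Sum>k<m. mult0 (a k) ((der ^^ k) u) n))"

lemma Lrep: assumes u: "fin_supp u" and m: "m \<ge> 1"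
  shows "opL m a u = Schain 0 m (Fop m a u)"
proof
  fix n
  have D: "diffD m u = Schain 0 m ((der ^^ m) u)" using diffD_Schain[OF u, of "m-1"] m by simp
  have M: "Schain k (m - k) (multk k (a k) (diffD k u)) = Schain 0 m (mult0 (a k) ((der ^^ k) u))"
    if k: "k \<in> {1..m-1}" for k
  proof -
    have "Schain k (m - k) (multk k (a k) (diffD k u))
        = Schain (0 + k) (m - k) (Schain 0 k (mult0 (a k) ((der ^^ k) u)))"
      using multk_eq[OF u] k by simp
    also have "\<dots> = Schain 0 (k + (m - k)) (mult0 (a k) ((der ^^ k) u))" using Schain_comp[of 0 k "m-k"] by simp
    also have "k + (m - k) = m" using k by auto
    finally show ?thesis .
  qed
  have S: "{..<m} = insert 0 {1..m-1}" using m by auto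
  have "Schain 0 m (Fop m a u) n = Schain 0 m ((der ^^ m) u) n
      + (\<Sum>k<m. Schain 0 m (mult0 (a k) ((der ^^ k) u)) n)"
    unfolding Fop_def by (simp add: Schain_add Schain_sum)
  also have "\<dots> = Schain 0 m ((der ^^ m) u) n
      + (\<Sum>k\<in>{1..m-1}. Schain 0 m (mult0 (a k) ((der ^^ k) u)) n) + Schain 0 m (mult0 (a 0) u) n"
    unfolding S by simp
  also have "\<dots> = opL m a u n"
    unfolding opL_def D using M by simp
  finally show "opL m a u n = Schain 0 m (Fop m a u) n" by simp
qed

fun chebP :: "nat \<Rightarrow> real poly" where
  "chebP 0 = 1"
| "chebP (Suc 0) = [:0, 1:]"
| "chebP (Suc (Suc n)) = pCons 0 (Polynomial.smult 2 (chebP (Suc n))) - chebP n"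

lemma poly_chebP: "poly (chebP n) x = chebT n x"
  by (induction n rule: chebP.induct) (auto simp: algebra_simps)

lemma coeff_chebP: "(\<forall>k>n. coeff (chebP n) k = 0) \<and> coeff (chebP n) n \<noteq> 0"
proof (induction n rule: chebP.induct)
  case 1 then show ?case by (auto simp: coeff_1)
next
  case 2 then show ?case by (auto simp: coeff_pCons split: nat.split)
next
  case (3 n)
  have hi: "coeff (chebP (Suc (Suc n))) k = 0" if hk: "k > Suc (Suc n)" for k
  proof -
    obtain k' where k: "k = Suc k'" using hk by (cases k) auto
    then show ?thesis using 3 hk by (auto simp: coeff_diff)
  qed
  have "coeff (chebP (Suc (Suc n))) (Suc (Suc n)) = 2 * coeff (chebP (Suc n)) (Suc n)"
    using 3 by (auto simp: coeff_diff)
  then show ?case using hi 3 by auto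
qed

lemma coeff_chebP_hi: "n < k \<Longrightarrow> coeff (chebP n) k = 0"
  using coeff_chebP by blast

lemma cheb_unique_aux:
  "\<forall>c. (\<forall>n>j. c n = 0) \<and> (\<forall>x. (\<Sum>n\<le>j. c n * chebT n x) = 0) \<longrightarrow> (\<forall>n. c n = 0)"
proof (induction j)
  case 0
  show ?case
  proof (intro allI impI)
    fix c :: "nat \<Rightarrow> real" and n
    assume h: "(\<forall>n>0. c n = 0) \<and> (\<forall>x. (\<Sum>n\<le>0. c n * chebT n x) = 0)"
    then have "c 0 = 0" by simp
    then show "c n = 0" using h by (cases n) auto
  qed
next
  case (Suc j)
  show ?case
  proof (intro allI impI)
    fix c :: "nat \<Rightarrow> real" and n
    assume h: "(\<forall>n>Suc j. c n = 0) \<and> (\<forall>x. (\<Sum>n\<le>Suc j. c n * chebT n x) = 0)"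
    define p where "p = (\<Sum>n\<le>Suc j. Polynomial.smult (c n) (chebP n))"
    have "\<forall>x. poly p x = 0" using h by (simp add: p_def poly_sum poly_chebP)
    then have p0: "p = 0" using poly_all_0_iff_0 by blast
    have "coeff p (Suc j) = (\<Sum>n\<le>Suc j. c n * coeff (chebP n) (Suc j))"
      by (simp add: p_def coeff_sum)
    also have "\<dots> = (\<Sum>n\<le>Suc j. if n = Suc j then c (Suc j) * coeff (chebP (Suc j)) (Suc j) else 0)"
      by (rule sum.cong) (auto simp: coeff_chebP_hi)
    also have "\<dots> = c (Suc j) * coeff (chebP (Suc j)) (Suc j)" by simp
    finally have "c (Suc j) = 0" using p0 coeff_chebP by auto
    have hj: "\<forall>n>j. c n = 0"
    proof (intro allI impI)
      fix n assume "j < n"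
      then have "n = Suc j \<or> n > Suc j" by auto
      then show "c n = 0" using h \<open>c (Suc j) = 0\<close> by auto
    qed
    then have "(\<forall>n>j. c n = 0) \<and> (\<forall>x. (\<Sum>n\<le>j. c n * chebT n x) = 0)"
      using h \<open>c (Suc j) = 0\<close> by simp
    then show "c n = 0" using Suc by blast
  qed
qed

definition mulx :: "(nat \<Rightarrow> real) \<Rightarrow> nat \<Rightarrow> real" where
  "mulx c n = (if n = 0 then c 1 / 2 else if n = 1 then c 0 + c 2 / 2 else (c (n - 1) + c (n + 1)) / 2)"

lemma mulx_sum: "N \<ge> 1 \<Longrightarrow> (\<Sum>n\<le>N. mulx c n * chebT n x)
    = x * (\<Sum>n\<le>N. c n * chebT n x) + (c (N+1) * chebT N x - c N * chebT (N+1) x) / 2"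
proof (induction N)
  case 0 then show ?case by simp
next
  case (Suc N)
  show ?case
  proof (cases "N = 0")
    case True
    then show ?thesis by (auto simp: mulx_def numeral_2_eq_2 field_simps)
  next
    case False
    then have IH: "(\<Sum>n\<le>N. mulx c n * chebT n x)
      = x * (\<Sum>n\<le>N. c n * chebT n x) + (c (N+1) * chebT N x - c N * chebT (N+1) x) / 2"
      using Suc by simp
    have m: "mulx c (Suc N) = (c N + c (N + 2)) / 2" using False by (simp add: mulx_def)
    show ?thesis using IH m by (simp add: algebra_simps add_divide_distrib diff_divide_distrib)
  qed
qed

definition xv :: "nat \<Rightarrow> nat \<Rightarrow> real" where
  "xv j = (mulx ^^ j) (\<lambda>n. if n = 0 then 1 else 0)"

lemma xv_Suc: "xv (Suc j) = mulx (xv j)"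
  by (simp add: xv_def)

lemma xv_supp: "\<forall>n>j. xv j n = 0"
proof (induction j)
  case 0 then show ?case by (simp add: xv_def)
next
  case (Suc j)
  then show ?case by (auto simp: xv_Suc mulx_def)
qed

lemma fin_xv[simp]: "fin_supp (xv j)"
  using xv_supp fin_supp_iff by blast

lemma xv_poly: "(\<Sum>n\<le>j. xv j n * chebT n x) = x ^ j"
proof (induction j)
  case 0 then show ?case by (simp add: xv_def)
next
  case (Suc j)
  have "(\<Sum>n\<le>Suc j. xv (Suc j) n * chebT n x)
      = x * (\<Sum>n\<le>Suc j. xv j n * chebT n x) + (xv j (Suc j+1) * chebT (Suc j) x - xv j (Suc j) * chebT (Suc j+1) x) / 2"
    unfolding xv_Suc by (rule mulx_sum) simp
  also have "\<dots> = x * (\<Sum>n\<le>j. xv j n * chebT n x)" using xv_supp[of j] by simp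
  finally show ?case using Suc by simp
qed

lemma xvec_eq: "xvec j = xv j"
  unfolding xvec_def
proof (rule the_equality)
  show "(\<forall>n>j. xv j n = 0) \<and> (\<forall>x. (\<Sum>n\<le>j. xv j n * chebT n x) = x ^ j)"
    using xv_supp xv_poly by blast
next
  fix c assume h: "(\<forall>n>j. c n = 0) \<and> (\<forall>x. (\<Sum>n\<le>j. c n * chebT n x) = x ^ j)"
  have s1: "\<forall>n>j. c n - xv j n = 0" using h xv_supp[of j] by simp
  have s2: "(\<Sum>n\<le>j. (c n - xv j n) * chebT n x) = 0" for x
  proof -
    have "(\<Sum>n\<le>j. (c n - xv j n) * chebT n x) = (\<Sum>n\<le>j. c n * chebT n x) - (\<Sum>n\<le>j. xv j n * chebT n x)"
      by (simp only: left_diff_distrib sum_subtractf)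
    then show ?thesis using h xv_poly[of j x] by simp
  qed
  have "(\<forall>n>j. c n - xv j n = 0) \<and> (\<forall>x. (\<Sum>n\<le>j. (c n - xv j n) * chebT n x) = 0)"
    using s1 s2 by blast
  then have "\<forall>n. c n - xv j n = 0"
    using spec[OF cheb_unique_aux[of j], of "\<lambda>n. c n - xv j n"] by (rule mp[rotated])
  then show "c = xv j" by (simp add: fun_eq_iff)
qed

lemma fin_mulx: "fin_supp c \<Longrightarrow> fin_supp (mulx c)"
proof -
  assume "fin_supp c"
  then obtain N where N: "\<forall>n>N. c n = 0" by (auto simp: fin_supp_iff)
  then have "\<forall>n>N+1. mulx c n = 0" by (auto simp: mulx_def)
  then show ?thesis unfolding fin_supp_iff by blast
qed

lemma mulx_scale: "mulx (\<lambda>n. a * u n) = (\<lambda>n. a * mulx u n)"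
  by (auto simp: mulx_def fun_eq_iff algebra_simps add_divide_distrib)

lemma der_mulx: assumes c: "fin_supp c"
  shows "der (mulx c) = (\<lambda>n. c n + mulx (der c) n)"
proof (rule der_eq)
  show "fin_supp (mulx c)" using fin_mulx c .
  show "fin_supp (\<lambda>n. c n + mulx (der c) n)" using fin_mulx c fin_supp_add der_fin by blast
  define e where "e = der c"
  have E0': "convS 0 e 0 = diffD 1 c 0" using der_spec[OF c] unfolding e_def by simp
  have E0: "e 0 - e 2 / 2 = c 1" using E0' by (simp add: convS_def diffD_def)
  have Ei: "e i - e (i+2) = 2 * real (i+1) * c (i+1)" if "i \<ge> 1" for i
    using der_rec[OF c that] e_def by simp
  show "convS 0 (\<lambda>n. c n + mulx (der c) n) = diffD 1 (mulx c)"
    unfolding e_def[symmetric]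
  proof
    fix n
    have "n = 0 \<or> n = 1 \<or> (\<exists>k::nat. n = k + 2)" by presburger
    then consider "n = 0" | "n = 1" | k where "n = k + 2" by blast
    then show "convS 0 (\<lambda>n. c n + mulx e n) n = diffD 1 (mulx c) n"
    proof cases
      case 1
      have a: "e 1 - e 3 = 4 * c 2" using Ei[of 1] by (simp add: eval_nat_numeral)
      have l: "convS 0 (\<lambda>n. c n + mulx e n) 0 = (c 0 + e 1 / 2) - (c 2 + (e 1 + e 3) / 2) / 2"
        by (simp add: convS_def mulx_def)
      have r: "diffD 1 (mulx c) 0 = c 0 + c 2 / 2" by (simp add: diffD_def mulx_def)
      show ?thesis unfolding 1 l r using a by (simp add: field_simps)
    next
      case 2
      have a: "e 2 - e 4 = 6 * c 3" using Ei[of 2] by (simp add: eval_nat_numeral)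
      have l: "convS 0 (\<lambda>n. c n + mulx e n) 1 = ((c 1 + (e 0 + e 2 / 2)) - (c 3 + (e 2 + e 4) / 2)) / 2"
        by (simp add: convS_def mulx_def eval_nat_numeral)
      have r: "diffD 1 (mulx c) 1 = 2 * ((c 1 + c 3) / 2)" by (simp add: diffD_def mulx_def eval_nat_numeral)
      show ?thesis unfolding 2 l r using a E0 by (simp add: field_simps)
    next
      case 3
      have a: "e (k+1) - e (k+3) = 2 * real (k+2) * c (k+2)" using Ei[of "k+1"] by (simp add: eval_nat_numeral)
      have b: "e (k+3) - e (k+5) = 2 * real (k+4) * c (k+4)" using Ei[of "k+3"] by (simp add: eval_nat_numeral)
      have l: "convS 0 (\<lambda>n. c n + mulx e n) (k+2) = ((c (k+2) + (e (k+1) + e (k+3)) / 2)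
           - (c (k+4) + (e (k+3) + e (k+5)) / 2)) / 2"
        by (simp add: convS_def mulx_def eval_nat_numeral)
      have r: "diffD 1 (mulx c) (k+2) = real (k+3) * ((c (k+2) + c (k+4)) / 2)"
        by (simp add: diffD_def mulx_def eval_nat_numeral)
      have "((c (k+2) + (e (k+1) + e (k+3)) / 2) - (c (k+4) + (e (k+3) + e (k+5)) / 2)) / 2
           = real (k+3) * ((c (k+2) + c (k+4)) / 2)"
        using a b by (simp add: field_simps)
      then show ?thesis unfolding 3 l r .
    qed
  qed
qed

lemma fin_delta[simp]: "fin_supp (\<lambda>n. if n = 0 then (1::real) else 0)"
  unfolding fin_supp_iff by (rule exI[of _ 0]) simp

lemma der_xv: "der (xv j) = (\<lambda>n. real j * xv (j - 1) n)"
proof (induction j)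
  case 0
  show ?case by (rule der_eq) (auto simp: convS_zero diffD_def xv_def fun_eq_iff convS_def)
next
  case (Suc j)
  have "der (xv (Suc j)) = (\<lambda>n. xv j n + mulx (der (xv j)) n)"
    unfolding xv_Suc by (rule der_mulx) simp
  also have "\<dots> = (\<lambda>n. xv j n + real j * mulx (xv (j - 1)) n)"
    unfolding Suc mulx_scale by simp
  also have "\<dots> = (\<lambda>n. real (Suc j) * xv j n)"
  proof (cases j)
    case 0 then show ?thesis by simp
  next
    case (Suc i) then show ?thesis by (simp add: xv_Suc algebra_simps)
  qed
  finally show ?case by simp
qed

lemma derk_xv: "(der ^^ k) (xv j) = (\<lambda>n. (if k \<le> j then fact j / fact (j - k) else 0) * xv (j - k) n)"
proof (induction k)
  case 0 then show ?case by simp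
next
  case (Suc k)
  define C where "C = (if k \<le> j then fact j / fact (j - k) else (0::real))"
  have "(der ^^ Suc k) (xv j) = der (\<lambda>n. C * xv (j - k) n)" using Suc by (simp add: C_def)
  also have "\<dots> = (\<lambda>n. C * (real (j - k) * xv (j - k - 1) n))" by (simp add: der_scale der_xv)
  also have "\<dots> = (\<lambda>n. (if Suc k \<le> j then fact j / fact (j - Suc k) else 0) * xv (j - Suc k) n)"
  proof (cases "Suc k \<le> j")
    case True
    have jk: "j - k = Suc (j - Suc k)" using True by simp
    define r where "r = real (j - k)"
    define F where "F = (fact (j - Suc k) :: real)"
    have f: "fact (j - k) = r * F" unfolding r_def F_def jk fact_Suc by simp
    have r0: "r \<noteq> 0" using True by (simp add: r_def)
    have F0: "F \<noteq> 0" by (simp add: F_def)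
    have "C * r = fact j / F"
      using True f r0 F0 by (simp add: C_def)
    then have "C * real (j - k) = fact j / fact (j - Suc k)" by (simp add: r_def F_def)
    then show ?thesis using True by (simp add: mult.assoc[symmetric])
  next
    case False
    then show ?thesis by (auto simp: C_def)
  qed
  finally show ?case .
qed

lemma Fop_xv: assumes j: "j < m"
  shows "Fop m a (xvec j) = Acol a j"
proof
  fix n
  have f: "fin_supp (xv (j - k))" for k by simp
  have "Fop m a (xvec j) n = (\<Sum>k<m. (if k \<le> j then fact j / fact (j - k) else 0) * mult0 (a k) (xv (j - k)) n)"
    using j by (simp add: Fop_def xvec_eq derk_xv mult0_scale)
  also have "\<dots> = (\<Sum>k\<le>j. fact j / fact (j - k) * mult0 (a k) (xv (j - k)) n)"
    by (rule sum.mono_neutral_cong_right) (use j in auto)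
  also have "\<dots> = Acol a j n" by (simp add: Acol_def xvec_eq)
  finally show "Fop m a (xvec j) n = Acol a j n" .
qed

lemma inv_props: assumes "invertible_mat M" "M \<in> carrier_mat m m"
  shows "inv_matrix m M \<in> carrier_mat m m \<and> M * inv_matrix m M = 1\<^sub>m m \<and> inv_matrix m M * M = 1\<^sub>m m"
proof -
  obtain N where N: "M * N = 1\<^sub>m m" "N * M = 1\<^sub>m (dim_row N)"
    using assms unfolding invertible_mat_def inverts_mat_def by auto
  have c1: "dim_col N = m" using N(1) by (metis index_mult_mat(3) index_one_mat(3))
  have c2: "dim_row N = m" using N(2) assms(2) by (metis carrier_matD(2) index_mult_mat(3) index_one_mat(3))
  have Nc: "N \<in> carrier_mat m m" using c1 c2 by auto
  have NM: "N * M = 1\<^sub>m m" using N(2) c2 by simp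
  have "inv_matrix m M = N"
    unfolding inv_matrix_def
  proof (rule the_equality)
    show "N \<in> carrier_mat m m \<and> M * N = 1\<^sub>m m \<and> N * M = 1\<^sub>m m" using Nc N(1) NM by auto
  next
    fix N' assume h: "N' \<in> carrier_mat m m \<and> M * N' = 1\<^sub>m m \<and> N' * M = 1\<^sub>m m"
    have "N' = N' * (M * N)" using h N(1) right_mult_one_mat by metis
    also have "\<dots> = (N' * M) * N" using assoc_mult_mat[of N' m m M m N m] h assms(2) Nc by simp
    also have "\<dots> = N" using h Nc by simp
    finally show "N' = N" .
  qed
  then show ?thesis using Nc N(1) NM by simp
qed

lemma B_lin:
  assumes B_dim: "\<forall>u. fin_supp u \<longrightarrow> B u \<in> carrier_vec m"
    and B_add: "\<forall>u w. fin_supp u \<longrightarrow> fin_supp w \<longrightarrow> B (\<lambda>n. u n + w n) = B u + B w"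
    and B_smult: "\<forall>c u. fin_supp u \<longrightarrow> B (\<lambda>n. c * u n) = c \<cdot>\<^sub>v B u"
  shows "B (\<lambda>n. \<Sum>j<J. w $ j * xvec j n) \<in> carrier_vec m
     \<and> (\<forall>i<m. B (\<lambda>n. \<Sum>j<J. w $ j * xvec j n) $ i = (\<Sum>j<J. w $ j * B (xvec j) $ i))"
proof (induction J)
  case 0
  have c: "B (\<lambda>_. 0) \<in> carrier_vec m" using B_dim by simp
  have "B (\<lambda>n. 0 * (\<lambda>_. 0) n) = 0 \<cdot>\<^sub>v B (\<lambda>_. 0)" using B_smult fin_supp_zero by blast
  then have e: "B (\<lambda>_. 0) = 0 \<cdot>\<^sub>v B (\<lambda>_. 0)" by simp
  have "\<forall>i<m. B (\<lambda>_. 0) $ i = 0"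
  proof (intro allI impI)
    fix i assume "i < m"
    then have "(0 \<cdot>\<^sub>v B (\<lambda>_. 0)) $ i = 0" using c by simp
    then show "B (\<lambda>_. 0) $ i = 0" using e by metis
  qed
  then show ?case using c by simp
next
  case (Suc J)
  define S where "S = (\<lambda>n. \<Sum>j<J. w $ j * xvec j n)"
  have fS: "fin_supp S" unfolding S_def
    by (rule fin_supp_sum) (auto intro: fin_supp_scale simp: xvec_eq)
  have fT: "fin_supp (xvec J)" by (simp add: xvec_eq)
  have e: "(\<lambda>n. \<Sum>j<Suc J. w $ j * xvec j n) = (\<lambda>n. S n + w $ J * xvec J n)"
    by (simp add: S_def)
  have e2: "B (\<lambda>n. S n + w $ J * xvec J n) = B S + w $ J \<cdot>\<^sub>v B (xvec J)"
    using B_add B_smult fS fT fin_supp_scale by metis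
  have cS: "B S \<in> carrier_vec m" using Suc S_def by simp
  have cT: "B (xvec J) \<in> carrier_vec m" using B_dim fT by simp
  have IH: "\<forall>i<m. B S $ i = (\<Sum>j<J. w $ j * B (xvec j) $ i)" using Suc unfolding S_def by blast
  have "B S + w $ J \<cdot>\<^sub>v B (xvec J) \<in> carrier_vec m" using cS cT by simp
  moreover have "\<forall>i<m. (B S + w $ J \<cdot>\<^sub>v B (xvec J)) $ i = (\<Sum>j<Suc J. w $ j * B (xvec j) $ i)"
  proof (intro allI impI)
    fix i assume i: "i < m"
    have "(B S + w $ J \<cdot>\<^sub>v B (xvec J)) $ i = B S $ i + w $ J * B (xvec J) $ i" using cS cT i by simp
    then show "(B S + w $ J \<cdot>\<^sub>v B (xvec J)) $ i = (\<Sum>j<Suc J. w $ j * B (xvec j) $ i)" using IH i by simp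
  qed
  ultimately show ?case unfolding e e2 by blast
qed




theorem mainTheorem5:
  fixes m :: nat
    and a :: "nat \<Rightarrow> nat \<Rightarrow> real"
    and B :: "(nat \<Rightarrow> real) \<Rightarrow> real vec"
    and b :: "real vec"
  assumes m: "m \<ge> 1"
    and a_abs: "\<forall>k<m. summable (\<lambda>n. \<bar>a k n\<bar>)"
    and B_dim: "\<forall>u. fin_supp u \<longrightarrow> B u \<in> carrier_vec m"
    and B_add: "\<forall>u w. fin_supp u \<longrightarrow> fin_supp w \<longrightarrow> B (\<lambda>n. u n + w n) = B u + B w"
    and B_smult: "\<forall>c u. fin_supp u \<longrightarrow> B (\<lambda>n. c * u n) = c \<cdot>\<^sub>v B u"
    and BX_inv: "invertible_mat (BXmat m B)"
    and b: "b \<in> carrier_vec m"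
  shows "(\<forall>j<m. opL m a (xvec j) = Schain 0 m (Acol a j))
    \<and> (\<forall>v. fin_supp v \<longrightarrow>
          (let u = (\<lambda>n. (intQ ^^ m) v n
                      + applyX m (inv_matrix m (BXmat m B) *\<^sub>v (b - B ((intQ ^^ m) v))) n)
           in B u = b
              \<and> opL m a u = Schain 0 m (\<lambda>n. opLt m a B v n
                                + applyA m a (inv_matrix m (BXmat m B) *\<^sub>v b) n)
              \<and> (\<forall>f. opL m a u = Schain 0 m f \<longleftrightarrow>
                     Schain 0 m (opLt m a B v)
                       = Schain 0 m (\<lambda>n. f n - applyA m a (inv_matrix m (BXmat m B) *\<^sub>v b) n))))"
proof (intro conjI allI impI)
  fix j assume j: "j < m"
  show "opL m a (xvec j) = Schain 0 m (Acol a j)"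
    using Lrep[of "xvec j" m a] m Fop_xv[OF j] by (simp add: xvec_eq)
next
  fix v :: "nat \<Rightarrow> real" assume fv: "fin_supp v"
  define M where "M = BXmat m B"
  define Ni where "Ni = inv_matrix m M"
  define Q where "Q = (intQ ^^ m) v"
  define w where "w = Ni *\<^sub>v (b - B Q)"
  define u where "u = (\<lambda>n. Q n + applyX m w n)"
  have Mc: "M \<in> carrier_mat m m" by (simp add: M_def BXmat_def)
  have IP: "Ni \<in> carrier_mat m m \<and> M * Ni = 1\<^sub>m m \<and> Ni * M = 1\<^sub>m m"
    using inv_props[OF BX_inv] Mc unfolding Ni_def M_def by blast
  have fQ: "fin_supp Q" using fv by (simp add: Q_def)
  have BQc: "B Q \<in> carrier_vec m" using B_dim fQ by simp
  have wc: "w \<in> carrier_vec m" using IP BQc b unfolding w_def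
    by (meson minus_carrier_vec mult_mat_vec_carrier)
  have fX: "fin_supp (applyX m w)" unfolding applyX_def
    by (rule fin_supp_sum) (auto intro: fin_supp_scale simp: xvec_eq)
  have fu: "fin_supp u" unfolding u_def using fQ fX fin_supp_add by blast
  have BL: "B (applyX m w) \<in> carrier_vec m
     \<and> (\<forall>i<m. B (applyX m w) $ i = (\<Sum>j<m. w $ j * B (xvec j) $ i))"
    unfolding applyX_def using B_lin[OF B_dim B_add B_smult] by blast
  have Mw: "M *\<^sub>v w = b - B Q"
  proof -
    have bc: "b - B Q \<in> carrier_vec m" using b BQc by simp
    have "M *\<^sub>v w = (M * Ni) *\<^sub>v (b - B Q)" unfolding w_def
      using assoc_mult_mat_vec[of M m m Ni m "b - B Q"] Mc IP bc by simp
    also have "\<dots> = 1\<^sub>m m *\<^sub>v (b - B Q)" using IP by simp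
    also have "\<dots> = b - B Q" using bc by simp
    finally show ?thesis .
  qed
  have Bu: "B u = b"
  proof (rule eq_vecI)
    have e: "B u = B Q + B (applyX m w)" unfolding u_def using B_add fQ fX by blast
    fix i assume i: "i < dim_vec b"
    then have im: "i < m" using b by simp
    have "(M *\<^sub>v w) $ i = (\<Sum>j<m. w $ j * B (xvec j) $ i)"
      using im Mc wc by (auto simp: M_def BXmat_def scalar_prod_def lessThan_atLeast0 mult.commute)
    then have "B (applyX m w) $ i = b $ i - B Q $ i" using Mw BL im b BQc by simp
    moreover have "(B Q + B (applyX m w)) $ i = B Q $ i + B (applyX m w) $ i"
      using BL BQc im by (metis carrier_vecD index_add_vec(1))
    ultimately show "B u $ i = b $ i" using e by simp
  next
    show "dim_vec (B u) = dim_vec b" using B_dim fu b by simp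
  qed
  have Fu: "Fop m a u = (\<lambda>n. opLt m a B v n + applyA m a (Ni *\<^sub>v b) n)"
  proof
    fix n
    have fx: "\<forall>j\<in>{..<m}. fin_supp (xvec j)" by (simp add: xvec_eq)
    have dk: "(der ^^ k) u = (\<lambda>n. (intQ ^^ (m - k)) v n + (\<Sum>j<m. w $ j * (der ^^ k) (xvec j) n))"
      if "k \<le> m" for k
    proof -
      have e1: "(der ^^ k) u = (\<lambda>n. (der ^^ k) Q n + (der ^^ k) (applyX m w) n)"
        unfolding u_def using derk_add[OF fQ fX] .
      have e2: "(der ^^ k) (applyX m w) = (\<lambda>n. \<Sum>j<m. w $ j * (der ^^ k) (xvec j) n)"
        unfolding applyX_def using derk_sum[OF finite_lessThan fx, where c = "\<lambda>j. w $ j"] by simp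
      have e3: "(der ^^ k) Q = (intQ ^^ (m - k)) v" unfolding Q_def using derk_intQ[OF fv that] .
      show ?thesis unfolding e1 e2 e3 ..
    qed
    have d0: "(der ^^ m) (xvec j) = (\<lambda>_. 0)" if "j < m" for j
      using that by (simp add: xvec_eq derk_xv)
    have dm: "(der ^^ m) u n = v n" using dk[of m] d0 by simp
    have fdx: "\<forall>j\<in>{..<m}. fin_supp ((der ^^ k) (xvec j))" for k by (simp add: xvec_eq)
    have fsum: "fin_supp (\<lambda>n. \<Sum>j<m. w $ j * (der ^^ k) (xvec j) n)" for k
      by (rule fin_supp_sum) (auto intro: fin_supp_scale simp: xvec_eq)
    have mk: "mult0 (a k) ((der ^^ k) u) n = mult0 (a k) ((intQ ^^ (m - k)) v) n
       + (\<Sum>j<m. w $ j * mult0 (a k) ((der ^^ k) (xvec j)) n)" if "k < m" for k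
    proof -
      have e1: "(der ^^ k) u = (\<lambda>n. (intQ ^^ (m - k)) v n + (\<Sum>j<m. w $ j * (der ^^ k) (xvec j) n))"
        using dk[of k] that by simp
      have e2: "mult0 (a k) (\<lambda>n. (intQ ^^ (m - k)) v n + (\<Sum>j<m. w $ j * (der ^^ k) (xvec j) n))
          = (\<lambda>n. mult0 (a k) ((intQ ^^ (m - k)) v) n + mult0 (a k) (\<lambda>n. \<Sum>j<m. w $ j * (der ^^ k) (xvec j) n) n)"
        by (rule mult0_add) (simp_all add: fv fsum)
      have e3: "mult0 (a k) (\<lambda>n. \<Sum>j<m. w $ j * (der ^^ k) (xvec j) n)
          = (\<lambda>n. \<Sum>j<m. w $ j * mult0 (a k) ((der ^^ k) (xvec j)) n)"
        using mult0_sum[OF finite_lessThan fdx, where c = "\<lambda>j. w $ j"] by simp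
      show ?thesis unfolding e1 e2 e3 ..
    qed
    have Ac: "(\<Sum>k<m. mult0 (a k) ((der ^^ k) (xvec j)) n) = Acol a j n" if "j < m" for j
      using fun_cong[OF Fop_xv[OF that, of a], of n] d0[OF that] by (simp add: Fop_def)
    have S2: "(\<Sum>k<m. \<Sum>j<m. w $ j * mult0 (a k) ((der ^^ k) (xvec j)) n) = applyA m a w n"
    proof -
      have "(\<Sum>k<m. \<Sum>j<m. w $ j * mult0 (a k) ((der ^^ k) (xvec j)) n)
          = (\<Sum>j<m. \<Sum>k<m. w $ j * mult0 (a k) ((der ^^ k) (xvec j)) n)" by (rule sum.swap)
      also have "\<dots> = (\<Sum>j<m. w $ j * (\<Sum>k<m. mult0 (a k) ((der ^^ k) (xvec j)) n))"
        by (simp only: sum_distrib_left)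
      also have "\<dots> = (\<Sum>j<m. w $ j * Acol a j n)"
        by (rule sum.cong) (simp_all add: Ac)
      finally show ?thesis by (simp add: applyA_def)
    qed
    have Aw: "applyA m a w n = applyA m a (Ni *\<^sub>v b) n - applyA m a (Ni *\<^sub>v B Q) n"
    proof -
      have wj: "w $ j = (Ni *\<^sub>v b) $ j - (Ni *\<^sub>v B Q) $ j" if "j < m" for j
      proof -
        have Nc: "Ni \<in> carrier_mat m m" using IP by blast
        have "Ni *\<^sub>v (b - B Q) = Ni *\<^sub>v b - Ni *\<^sub>v B Q"
          using mult_minus_distrib_mat_vec[OF Nc b BQc] .
        moreover have "(Ni *\<^sub>v b - Ni *\<^sub>v B Q) $ j = (Ni *\<^sub>v b) $ j - (Ni *\<^sub>v B Q) $ j"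
          using Nc that by simp
        ultimately show ?thesis by (simp add: w_def)
      qed
      have "applyA m a w n = (\<Sum>j<m. ((Ni *\<^sub>v b) $ j - (Ni *\<^sub>v B Q) $ j) * Acol a j n)"
        unfolding applyA_def by (rule sum.cong) (simp_all add: wj)
      also have "\<dots> = applyA m a (Ni *\<^sub>v b) n - applyA m a (Ni *\<^sub>v B Q) n"
        unfolding applyA_def by (simp only: left_diff_distrib sum_subtractf)
      finally show ?thesis .
    qed
    have S: "(\<Sum>k<m. mult0 (a k) ((der ^^ k) u) n) = (\<Sum>k<m. mult0 (a k) ((intQ ^^ (m - k)) v) n
       + (\<Sum>j<m. w $ j * mult0 (a k) ((der ^^ k) (xvec j)) n))"
      by (rule sum.cong) (simp_all add: mk)
    have "Fop m a u n = v n + (\<Sum>k<m. mult0 (a k) ((intQ ^^ (m - k)) v) n)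
        + (\<Sum>k<m. \<Sum>j<m. w $ j * mult0 (a k) ((der ^^ k) (xvec j)) n)"
      unfolding Fop_def dm S sum.distrib by simp
    then show "Fop m a u n = opLt m a B v n + applyA m a (Ni *\<^sub>v b) n"
      unfolding S2 Aw by (simp add: opLt_def Ni_def M_def Q_def)
  qed
  have L: "opL m a u = Schain 0 m (\<lambda>n. opLt m a B v n + applyA m a (Ni *\<^sub>v b) n)"
    using Lrep[OF fu m] Fu by simp
  have L3: "\<forall>f. opL m a u = Schain 0 m f \<longleftrightarrow>
                     Schain 0 m (opLt m a B v)
                       = Schain 0 m (\<lambda>n. f n - applyA m a (Ni *\<^sub>v b) n)"
    unfolding L Schain_add Schain_diff by (simp add: fun_eq_iff eq_diff_eq)
  have "B u = b \<and> opL m a u = Schain 0 m (\<lambda>n. opLt m a B v n + applyA m a (Ni *\<^sub>v b) n)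
     \<and> (\<forall>f. opL m a u = Schain 0 m f \<longleftrightarrow>
                     Schain 0 m (opLt m a B v)
                       = Schain 0 m (\<lambda>n. f n - applyA m a (Ni *\<^sub>v b) n))"
    using Bu L L3 by blast
  then show "let u = (\<lambda>n. (intQ ^^ m) v n
                      + applyX m (inv_matrix m (BXmat m B) *\<^sub>v (b - B ((intQ ^^ m) v))) n)
           in B u = b
              \<and> opL m a u = Schain 0 m (\<lambda>n. opLt m a B v n
                                + applyA m a (inv_matrix m (BXmat m B) *\<^sub>v b) n)
              \<and> (\<forall>f. opL m a u = Schain 0 m f \<longleftrightarrow>
                     Schain 0 m (opLt m a B v)
                       = Schain 0 m (\<lambda>n. f n - applyA m a (inv_matrix m (BXmat m B) *\<^sub>v b) n))"
    unfolding Let_def u_def w_def Q_def Ni_def M_def .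
qed

end
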